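(* Let $N\ge1$, $(\Psi_N)_{jk}=\binom{j}{k}$ for $0\le j,k<N$, $\Lambda_N=\mathrm{diag}(1,-1,\dots,(-1)^{N-1})$, and let $J_N$ be the symmetric tridiagonal matrix with $(J_N)_{kk}=k(2k^2+3k+2-N^2)$, $(J_N)_{k,k+1}=(J_N)_{k+1,k}=(k+1)(N^2-(k+1)^2)$. If $\vec v$ is an eigenvector of $J_N$ with eigenvalue $\lambda\neq(N^2-1)/2$, then $\vec v+\Psi_N\Lambda_N\vec v$ and $\vec v-\Psi_N\Lambda_N\vec v$ are nonzero eigenvectors of the binomial transform $\Psi_N\Lambda_N$ with eigenvalues $+1$ and $-1$ respectively. If $N$ is odd and $\vec v$ is an eigenvector of $J_N$ with eigenvalue $(N^2-1)/2$, then $\Psi_N\Lambda_N\vec v=\vec v$.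
   Context: Matrix indices start at $0$. *)

theory Defs
  imports "Jordan_Normal_Form.Char_Poly"
begin

definition Psi :: "nat \<Rightarrow> real mat" where
  "Psi N = mat N N (\<lambda>(j,k). real (j choose k))"

definition Lam :: "nat \<Rightarrow> real mat" where
  "Lam N = mat N N (\<lambda>(j,k). if j = k then (-1) ^ j else 0)"

definition Jmat :: "nat \<Rightarrow> real mat" where
  "Jmat N = mat N N (\<lambda>(j,k).
     if j = k then real k * (2 * real k ^ 2 + 3 * real k + 2 - real N ^ 2)
     else if k = j + 1 then real (j + 1) * (real N ^ 2 - real (j + 1) ^ 2)
     else if j = k + 1 then real (k + 1) * (real N ^ 2 - real (k + 1) ^ 2)
     else 0)"

end

theory Submission imports Defs begin

definition aa :: "nat \<Rightarrow> nat \<Rightarrow> real" where "aa N k = real k * (real N ^ 2 - real k ^ 2)"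
definition dd :: "nat \<Rightarrow> nat \<Rightarrow> real" where "dd N k = real k * (2 * real k ^ 2 + 3 * real k + 2 - real N ^ 2)"

lemma choose_up: "(real l + 1) * real (j choose (l+1)) = (real j - real l) * real (j choose l)"
proof -
  have e1: "real (Suc j) * real (j choose l) = real (Suc j choose Suc l) * real (Suc l)"
    by (metis Suc_times_binomial_eq of_nat_mult)
  have e2: "real (Suc j choose Suc l) = real (j choose l) + real (j choose Suc l)" by simp
  show ?thesis using e1 e2 by (simp add: algebra_simps)
qed

lemma ident_poly:
  fixes j l n X Y1 Y3 Y4 :: real
  assumes "j*Y1 = (j-l)*X" "(j+1-l)*Y3 = l*X" "(l+1)*Y4=(j-l)*X"
  shows "j*(n^2-j^2)*Y1 + j*(2*j^2+3*j+2-n^2)*X + (j+1)*(n^2-(j+1)^2)*(X+Y3)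
     - l*(n^2-l^2)*Y3 + l*(2*l^2+3*l+2-n^2)*X - (l+1)*(n^2-(l+1)^2)*Y4 = (n^2-1)*X"
proof -
  have "j*(n^2-j^2)*Y1 + j*(2*j^2+3*j+2-n^2)*X + (j+1)*(n^2-(j+1)^2)*(X+Y3)
     - l*(n^2-l^2)*Y3 + l*(2*l^2+3*l+2-n^2)*X - (l+1)*(n^2-(l+1)^2)*Y4 - (n^2-1)*X
     = (n^2-j^2)*(j*Y1-(j-l)*X) - (n^2-(l+1)^2)*((l+1)*Y4-(j-l)*X) + (n^2-(j+1)^2-(j+1)*l-l^2)*((j+1-l)*Y3 - l*X)"
    by (simp add: algebra_simps power2_eq_square)
  also have "\<dots> = 0" using assms by simp
  finally show ?thesis by simp
qed

lemma ident:
  "aa N j * real ((j-1) choose l) + dd N j * real (j choose l) + aa N (j+1) * real ((j+1) choose l)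
   - aa N l * real (j choose (l-1)) + dd N l * real (j choose l) - aa N (l+1) * real (j choose (l+1))
   = (real N ^ 2 - 1) * real (j choose l)"
proof (cases l)
  case 0
  show ?thesis unfolding 0 apply (simp add: aa_def dd_def)
    by (simp add: algebra_simps power2_eq_square power3_eq_cube)
next
  case (Suc m)
  have h1: "real j * real ((j-1) choose l) = (real j - real l) * real (j choose l)"
  proof (cases "l \<le> j")
    case True
    have "(j - l) * (j choose l) = j * ((j-1) choose l)" by (rule binomial_absorb_comp)
    then have "real (j - l) * real (j choose l) = real j * real ((j-1) choose l)"
      by (metis of_nat_mult)
    with True show ?thesis by (simp add: of_nat_diff)
  next
    case False then show ?thesis by (simp add: binomial_eq_0)
  qed
  have h2: "real ((j+1) choose l) = real (j choose l) + real (j choose m)"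
    using Suc by simp
  have h3: "(real j + 1 - real l) * real (j choose m) = real l * real (j choose l)"
    using choose_up[of m j] Suc by (simp add: algebra_simps)
  have h4: "(real l + 1) * real (j choose (l+1)) = (real j - real l) * real (j choose l)"
    by (rule choose_up)
  show ?thesis using ident_poly[OF h1 h3 h4, of N] unfolding aa_def dd_def h2
    by (simp add: Suc algebra_simps)
qed

lemma mult_entry:
  assumes "A \<in> carrier_mat n n" "B \<in> carrier_mat n n" "i < n" "j < n"
  shows "(A*B) $$ (i,j) = (\<Sum>k<n. A $$ (i,k) * B $$ (k,j))"
  using assms by (auto simp: scalar_prod_def lessThan_atLeast0 intro!: sum.cong)

lemma mult_vec_entry:
  assumes "A \<in> carrier_mat n n" "v \<in> carrier_vec n" "i < n"
  shows "(A *\<^sub>v v) $ i = (\<Sum>k<n. A $$ (i,k) * v $ k)"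
  using assms by (auto simp: scalar_prod_def lessThan_atLeast0 intro!: sum.cong)

lemma alt_sum:
  assumes "j < N"
  shows "(\<Sum>k<N. real (j choose k) * (-1)^k * (real (k choose l) * (-1)^l)) = (if j = l then 1 else 0)"
proof -
  have "(\<Sum>k<N. real (j choose k) * (-1)^k * (real (k choose l) * (-1)^l)) =
        (\<Sum>k\<le>j. real (j choose k) * (-1)^k * (real (k choose l) * (-1)^l))"
    using assms by (intro sum.mono_neutral_right) auto
  also have "\<dots> = (if j = l then 1 else 0)"
  proof (cases "l \<le> j")
    case False
    then have "\<And>k. k \<le> j \<Longrightarrow> real (k choose l) = 0" by simp
    with False show ?thesis by (simp add: sum.neutral)
  next
    case True
    have "(\<Sum>k\<le>j. real (j choose k) * (-1)^k * (real (k choose l) * (-1)^l)) =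
          (\<Sum>k\<in>{l..j}. real (j choose k) * (-1)^k * (real (k choose l) * (-1)^l))"
      by (intro sum.mono_neutral_right) auto
    also have "\<dots> = (\<Sum>k\<in>{0+l..(j-l)+l}. real (j choose l) * ((-1)^(k-l) * real ((j-l) choose (k-l))))"
    proof (intro sum.cong)
      fix k assume k: "k \<in> {0+l..(j-l)+l}"
      then have "(j choose k) * (k choose l) = (j choose l) * ((j - l) choose (k - l))"
        using choose_mult[of l k j] True by auto
      then have e: "real (j choose k) * real (k choose l) = real (j choose l) * real ((j - l) choose (k - l))"
        by (metis of_nat_mult)
      have "(-1::real)^k = (-1)^(k-l) * (-1)^l" using k by (simp add: power_add[symmetric])
      moreover have "(-1::real)^l * (-1)^l = 1" by (simp add: power_add[symmetric] flip: power_mult_distrib)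
      ultimately show "real (j choose k) * (-1)^k * (real (k choose l) * (-1)^l) = real (j choose l) * ((-1)^(k-l) * real ((j-l) choose (k-l)))"
        proof -
        assume a: "(-1::real)^k = (-1)^(k-l) * (-1)^l" "(-1::real)^l * (-1)^l = 1"
        have "real (j choose k) * (-1)^k * (real (k choose l) * (-1)^l) = (real (j choose k) * real (k choose l)) * (-1)^(k-l) * ((-1)^l * (-1)^l)"
          unfolding a(1) by (simp add: algebra_simps)
        then show ?thesis unfolding e a(2) by simp
      qed
    qed (use True in auto)
    also have "\<dots> = real (j choose l) * (\<Sum>i\<in>{0..j-l}. (-1)^i * real ((j-l) choose i))"
      by (subst sum.shift_bounds_cl_nat_ivl) (simp add: sum_distrib_left)
    also have "\<dots> = (if j = l then 1 else 0)"
    proof (cases "j = l")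
      case True then show ?thesis by simp
    next
      case False
      then have "(\<Sum>i\<le>j-l. (-1)^i * real ((j-l) choose i)) = 0"
        using \<open>l \<le> j\<close> by (intro choose_alternating_sum) auto
      with False show ?thesis by (simp add: atLeast0AtMost)
    qed
    finally show ?thesis .
  qed
  finally show ?thesis .
qed

definition Jf :: "nat \<Rightarrow> nat \<Rightarrow> nat \<Rightarrow> real" where
  "Jf N j k = (if j = k then real k * (2 * real k ^ 2 + 3 * real k + 2 - real N ^ 2)
     else if k = j + 1 then real (j + 1) * (real N ^ 2 - real (j + 1) ^ 2)
     else if j = k + 1 then real (k + 1) * (real N ^ 2 - real (k + 1) ^ 2)
     else 0)"

lemma aa0[simp]: "aa N 0 = 0" by (simp add: aa_def)

lemma Jmat_carrier: "Jmat N \<in> carrier_mat N N" by (simp add: Jmat_def)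
lemma Jmat_entry: "j < N \<Longrightarrow> k < N \<Longrightarrow> Jmat N $$ (j,k) = Jf N j k"
  by (simp add: Jmat_def Jf_def)
lemma Jf_sym: "Jf N j k = Jf N k j" by (auto simp: Jf_def)

lemma tri_sum:
  assumes "j < N"
  shows "(\<Sum>i<N. Jf N j i * f i) = aa N j * f (j-1) + dd N j * f j + aa N (j+1) * f (j+1)"
proof -
  have "(\<Sum>i<N. Jf N j i * f i) = (\<Sum>i<N. (if i = j-1 then (if 0<j then aa N j * f (j-1) else 0) else 0)
      + (if i = j then dd N j * f j else 0) + (if i = j+1 then aa N (j+1) * f (j+1) else 0))"
    by (intro sum.cong) (auto simp: Jf_def aa_def dd_def)
  also have "\<dots> = aa N j * f (j-1) + dd N j * f j + aa N (j+1) * f (j+1)"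
  proof (cases "j+1<N")
    case True then show ?thesis using assms by (auto simp: sum.distrib)
  next
    case False then have "j+1 = N" using assms by simp
    then have "aa N (j+1) = 0" by (simp add: aa_def)
    then show ?thesis using assms False by (auto simp: sum.distrib)
  qed
  finally show ?thesis .
qed

definition Bm :: "nat \<Rightarrow> real mat" where
  "Bm N = mat N N (\<lambda>(k,l). real (k choose l) * (-1)^l)"

lemma B_eq: "Psi N * Lam N = Bm N"
proof (rule eq_matI)
  fix i j assume ij: "i < dim_row (Bm N)" "j < dim_col (Bm N)"
  have "(Psi N * Lam N) $$ (i,j) = (\<Sum>k<N. Psi N $$ (i,k) * Lam N $$ (k,j))"
    using ij by (intro mult_entry) (auto simp: Psi_def Lam_def Bm_def)
  also have "\<dots> = (\<Sum>k<N. if k = j then real (i choose j) * (-1)^j else 0)"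
    using ij by (intro sum.cong) (auto simp: Psi_def Lam_def Bm_def)
  also have "\<dots> = Bm N $$ (i,j)" using ij by (simp add: Bm_def)
  finally show "(Psi N * Lam N) $$ (i,j) = Bm N $$ (i,j)" .
qed (auto simp: Psi_def Lam_def Bm_def)

lemma Bm_carrier: "Bm N \<in> carrier_mat N N" by (simp add: Bm_def)

lemma BB: "Bm N * Bm N = 1\<^sub>m N"
proof (rule eq_matI)
  fix i j assume ij: "i < dim_row (1\<^sub>m N)" "j < dim_col (1\<^sub>m N)"
  have "(Bm N * Bm N) $$ (i,j) = (\<Sum>k<N. Bm N $$ (i,k) * Bm N $$ (k,j))"
    using ij by (intro mult_entry) (auto simp: Bm_def)
  also have "\<dots> = (\<Sum>k<N. real (i choose k) * (-1)^k * (real (k choose j) * (-1)^j))"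
    using ij by (intro sum.cong) (auto simp: Bm_def)
  also have "\<dots> = 1\<^sub>m N $$ (i,j)" using ij alt_sum[of i N j] by simp
  finally show "(Bm N * Bm N) $$ (i,j) = 1\<^sub>m N $$ (i,j)" .
qed (auto simp: Bm_def)

lemma anti: "Jmat N * Bm N + Bm N * Jmat N = (real N ^ 2 - 1) \<cdot>\<^sub>m Bm N"
proof (rule eq_matI)
  fix j l assume jl: "j < dim_row ((real N ^ 2 - 1) \<cdot>\<^sub>m Bm N)" "l < dim_col ((real N ^ 2 - 1) \<cdot>\<^sub>m Bm N)"
  then have j: "j < N" and l: "l < N" by (auto simp: Bm_def)
  have "(Jmat N * Bm N) $$ (j,l) = (\<Sum>k<N. Jmat N $$ (j,k) * Bm N $$ (k,l))"
    using j l by (intro mult_entry) (auto simp: Bm_def Jmat_def)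
  also have "\<dots> = (\<Sum>k<N. Jf N j k * (real (k choose l) * (-1)^l))"
    using j l by (intro sum.cong) (auto simp: Bm_def Jmat_entry)
  also have "\<dots> = aa N j * (real ((j-1) choose l) * (-1)^l) + dd N j * (real (j choose l) * (-1)^l)
       + aa N (j+1) * (real ((j+1) choose l) * (-1)^l)"
    by (rule tri_sum[OF j])
  finally have e1: "(Jmat N * Bm N) $$ (j,l) = \<dots>" .
  have "(Bm N * Jmat N) $$ (j,l) = (\<Sum>k<N. Bm N $$ (j,k) * Jmat N $$ (k,l))"
    using j l by (intro mult_entry) (auto simp: Bm_def Jmat_def)
  also have "\<dots> = (\<Sum>k<N. Jf N l k * (real (j choose k) * (-1)^k))"
    using j l by (intro sum.cong) (auto simp: Bm_def Jmat_entry Jf_sym)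
  also have "\<dots> = aa N l * (real (j choose (l-1)) * (-1)^(l-1)) + dd N l * (real (j choose l) * (-1)^l)
       + aa N (l+1) * (real (j choose (l+1)) * (-1)^(l+1))"
    by (rule tri_sum[OF l])
  finally have e2: "(Bm N * Jmat N) $$ (j,l) = \<dots>" .
  have key: "(Jmat N * Bm N) $$ (j,l) + (Bm N * Jmat N) $$ (j,l) = (real N ^ 2 - 1) * (real (j choose l) * (-1)^l)"
  proof -
    have q: "aa N l * (real (j choose (l-1)) * (-1)^(l-1)) = - ((-1)^l * (aa N l * real (j choose (l-1))))"
      by (cases l) (auto simp: aa_def)
    have q2: "(-1::real)^(l+1) = -((-1::real)^l)" by simp
    have "(Jmat N * Bm N) $$ (j,l) + (Bm N * Jmat N) $$ (j,l) = (-1)^l * (aa N j * real ((j-1) choose l) + dd N j * real (j choose l) + aa N (j+1) * real ((j+1) choose l)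
   - aa N l * real (j choose (l-1)) + dd N l * real (j choose l) - aa N (l+1) * real (j choose (l+1)))"
      unfolding e1 e2 q q2 by (simp add: algebra_simps)
    also have "\<dots> = (-1)^l * ((real N ^ 2 - 1) * real (j choose l))" using ident[of N j l] by simp
    finally show ?thesis by (simp add: algebra_simps)
  qed
  show "(Jmat N * Bm N + Bm N * Jmat N) $$ (j,l) = ((real N ^ 2 - 1) \<cdot>\<^sub>m Bm N) $$ (j,l)"
    using key j l by (simp add: Bm_def Jmat_def)
qed (auto simp: Bm_def Jmat_def)


lemma JBv:
  assumes v: "v \<in> carrier_vec N" and ev: "Jmat N *\<^sub>v v = lam \<cdot>\<^sub>v v"
  shows "Jmat N *\<^sub>v (Bm N *\<^sub>v v) = (real N ^ 2 - 1 - lam) \<cdot>\<^sub>v (Bm N *\<^sub>v v)"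
proof -
  have J: "Jmat N \<in> carrier_mat N N" and B: "Bm N \<in> carrier_mat N N"
    by (rule Jmat_carrier, rule Bm_carrier)
  have 1: "(Jmat N * Bm N + Bm N * Jmat N) *\<^sub>v v = Jmat N *\<^sub>v (Bm N *\<^sub>v v) + lam \<cdot>\<^sub>v (Bm N *\<^sub>v v)"
    using J B v by (simp add: add_mult_distrib_mat_vec[of _ N N] ev mult_mat_vec[of _ N N])
  have 2: "((real N ^ 2 - 1) \<cdot>\<^sub>m Bm N) *\<^sub>v v = (real N ^ 2 - 1) \<cdot>\<^sub>v (Bm N *\<^sub>v v)"
    using B v by (intro eq_vecI) (auto simp: smult_scalar_prod_distrib[of _ N])
  have 3: "Jmat N *\<^sub>v (Bm N *\<^sub>v v) + lam \<cdot>\<^sub>v (Bm N *\<^sub>v v) = (real N ^ 2 - 1) \<cdot>\<^sub>v (Bm N *\<^sub>v v)"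
    using 1 2 anti[of N] by simp
  show ?thesis
  proof (rule eq_vecI)
    fix i assume "i < dim_vec ((real N ^ 2 - 1 - lam) \<cdot>\<^sub>v (Bm N *\<^sub>v v))"
    then have i: "i < N" using B by simp
    have "(Jmat N *\<^sub>v (Bm N *\<^sub>v v) + lam \<cdot>\<^sub>v (Bm N *\<^sub>v v)) $ i = ((real N ^ 2 - 1) \<cdot>\<^sub>v (Bm N *\<^sub>v v)) $ i"
      using 3 by simp
    then show "(Jmat N *\<^sub>v (Bm N *\<^sub>v v)) $ i = ((real N ^ 2 - 1 - lam) \<cdot>\<^sub>v (Bm N *\<^sub>v v)) $ i"
      using i J B by (simp add: algebra_simps)
  qed (use J B in simp)
qed

lemma rec_zero:
  assumes w: "w \<in> carrier_vec N" and ev: "Jmat N *\<^sub>v w = mu \<cdot>\<^sub>v w" and w0: "w $ 0 = 0"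
  shows "w = 0\<^sub>v N"
proof -
  have "\<forall>i\<le>k. w $ i = 0" if "k < N" for k
    using that
  proof (induction k)
    case 0 then show ?case using w0 by simp
  next
    case (Suc k)
    then have IH: "\<forall>i\<le>k. w $ i = 0" and k: "k < N" by auto
    have "(Jmat N *\<^sub>v w) $ k = (\<Sum>i<N. Jmat N $$ (k,i) * w $ i)"
      using w k by (intro mult_vec_entry[OF Jmat_carrier]) auto
    also have "\<dots> = (\<Sum>i<N. Jf N k i * w $ i)" using k by (intro sum.cong) (auto simp: Jmat_entry)
    also have "\<dots> = aa N k * w $ (k-1) + dd N k * w $ k + aa N (k+1) * w $ (k+1)"
      by (rule tri_sum[OF k])
    also have "\<dots> = aa N (k+1) * w $ (k+1)" using IH by simp
    finally have "aa N (k+1) * w $ (k+1) = mu * w $ k" using ev k w by simp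
    then have "aa N (k+1) * w $ (k+1) = 0" using IH by simp
    moreover have "aa N (k+1) \<noteq> 0"
    proof -
      have "real (k+1) ^ 2 < real N ^ 2" using Suc.prems by (intro power_strict_mono) auto
      then show ?thesis unfolding aa_def using Suc.prems by auto
    qed
    ultimately have "w $ (k+1) = 0" by simp
    with IH show ?case by (auto simp: le_Suc_eq)
  qed
  then show ?thesis using w by (intro eq_vecI) auto
qed


lemma nonzero_comp: assumes "v \<in> carrier_vec N" "v \<noteq> 0\<^sub>v N" obtains i where "i < N" "v $ i \<noteq> 0"
  using assms by (metis carrier_vecD eq_vecI index_zero_vec(1) index_zero_vec(2))

lemma not_fixed:
  assumes v: "v \<in> carrier_vec N" and nz: "v \<noteq> 0\<^sub>v N" and ev: "Jmat N *\<^sub>v v = lam \<cdot>\<^sub>v v"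
    and Bv: "Bm N *\<^sub>v v = s \<cdot>\<^sub>v v" and s: "s \<noteq> 0"
  shows "lam = (real N ^ 2 - 1) / 2"
proof -
  obtain i where i: "i < N" "v $ i \<noteq> 0" using nonzero_comp[OF v nz] .
  have "Jmat N *\<^sub>v (Bm N *\<^sub>v v) = s \<cdot>\<^sub>v (lam \<cdot>\<^sub>v v)"
    unfolding Bv using v by (simp add: mult_mat_vec[OF Jmat_carrier] ev)
  moreover have "Jmat N *\<^sub>v (Bm N *\<^sub>v v) = (real N ^ 2 - 1 - lam) \<cdot>\<^sub>v (s \<cdot>\<^sub>v v)"
    using JBv[OF v ev] Bv by simp
  ultimately have "(s \<cdot>\<^sub>v (lam \<cdot>\<^sub>v v)) $ i = ((real N ^ 2 - 1 - lam) \<cdot>\<^sub>v (s \<cdot>\<^sub>v v)) $ i" by simp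
  then have "s * (lam * v $ i) = (real N ^ 2 - 1 - lam) * (s * v $ i)" using i v by simp
  then have "s * v $ i * lam = s * v $ i * (real N ^ 2 - 1 - lam)" by (simp add: algebra_simps)
  then have "lam = real N ^ 2 - 1 - lam" using s i by simp
  then show ?thesis by simp
qed

lemma sum_zero_vec:
  fixes a b :: "real vec"
  assumes a: "a \<in> carrier_vec N" and b: "b \<in> carrier_vec N" and h: "a + b = 0\<^sub>v N"
  shows "b = (-1) \<cdot>\<^sub>v a"
proof (rule eq_vecI)
  fix i assume "i < dim_vec ((-1) \<cdot>\<^sub>v a)" then have i: "i < N" using a by simp
  have "(a + b) $ i = 0\<^sub>v N $ i" using h by simp
  then have "a $ i + b $ i = 0" using i a b by simp
  then have "b $ i = -1 * a $ i" by linarith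
  then show "b $ i = ((-1) \<cdot>\<^sub>v a) $ i" using i a b by simp
qed (use a b in simp)

lemma diff_zero_vec:
  fixes a b :: "real vec"
  assumes a: "a \<in> carrier_vec N" and b: "b \<in> carrier_vec N" and h: "a - b = 0\<^sub>v N"
  shows "b = 1 \<cdot>\<^sub>v a" "b = a"
proof -
  show "b = a"
  proof (rule eq_vecI)
    fix i assume "i < dim_vec a" then have i: "i < N" using a by simp
    have "(a - b) $ i = 0\<^sub>v N $ i" using h by simp
    then have "a $ i - b $ i = 0" using i a b by simp
    then show "b $ i = a $ i" by linarith
  qed (use a b in simp)
  then show "b = 1 \<cdot>\<^sub>v a" by simp
qed

theorem mainTheorem12:
  fixes N :: nat
  assumes "N \<ge> 1"
  shows "(\<forall>v lam. eigenvector (Jmat N) v lam \<and> lam \<noteq> (real N ^ 2 - 1) / 2 \<longrightarrow>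
            eigenvector (Psi N * Lam N) (v + (Psi N * Lam N) *\<^sub>v v) 1 \<and>
            eigenvector (Psi N * Lam N) (v - (Psi N * Lam N) *\<^sub>v v) (-1))
       \<and> (odd N \<longrightarrow> (\<forall>v. eigenvector (Jmat N) v ((real N ^ 2 - 1) / 2) \<longrightarrow>
            (Psi N * Lam N) *\<^sub>v v = v))"
proof -
  have J: "Jmat N \<in> carrier_mat N N" and B: "Bm N \<in> carrier_mat N N"
    by (rule Jmat_carrier, rule Bm_carrier)
  have dJ: "dim_row (Jmat N) = N" and dB: "dim_row (Bm N) = N" using J B by auto
  have BBv: "Bm N *\<^sub>v (Bm N *\<^sub>v v) = v" if v: "v \<in> carrier_vec N" for v
  proof -
    have "Bm N *\<^sub>v (Bm N *\<^sub>v v) = (Bm N * Bm N) *\<^sub>v v" using B v by simp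
    also have "\<dots> = v" unfolding BB using v by simp
    finally show ?thesis .
  qed
  have P1: "eigenvector (Bm N) (v + Bm N *\<^sub>v v) 1 \<and> eigenvector (Bm N) (v - Bm N *\<^sub>v v) (-1)"
    if ev: "eigenvector (Jmat N) v lam" and ne: "lam \<noteq> (real N ^ 2 - 1) / 2" for v lam
  proof -
    from ev have v: "v \<in> carrier_vec N" and nz: "v \<noteq> 0\<^sub>v N" and Jv: "Jmat N *\<^sub>v v = lam \<cdot>\<^sub>v v"
      unfolding eigenvector_def dJ by auto
    have w: "Bm N *\<^sub>v v \<in> carrier_vec N" using B v by simp
    have e1: "Bm N *\<^sub>v (v + Bm N *\<^sub>v v) = 1 \<cdot>\<^sub>v (v + Bm N *\<^sub>v v)"
      using B v w by (intro eq_vecI) (auto simp: mult_add_distrib_mat_vec[of _ N N] BBv[OF v])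
    have e2: "Bm N *\<^sub>v (v - Bm N *\<^sub>v v) = (-1) \<cdot>\<^sub>v (v - Bm N *\<^sub>v v)"
      using B v w by (intro eq_vecI) (auto simp: mult_minus_distrib_mat_vec[of _ N N] BBv[OF v])
    have n1: "v + Bm N *\<^sub>v v \<noteq> 0\<^sub>v N"
    proof
      assume "v + Bm N *\<^sub>v v = 0\<^sub>v N"
      then have "Bm N *\<^sub>v v = (-1) \<cdot>\<^sub>v v" by (rule sum_zero_vec[OF v w])
      from not_fixed[OF v nz Jv this] ne show False by simp
    qed
    have n2: "v - Bm N *\<^sub>v v \<noteq> 0\<^sub>v N"
    proof
      assume "v - Bm N *\<^sub>v v = 0\<^sub>v N"
      then have "Bm N *\<^sub>v v = 1 \<cdot>\<^sub>v v" by (rule diff_zero_vec(1)[OF v w])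
      from not_fixed[OF v nz Jv this] ne show False by simp
    qed
    show ?thesis unfolding eigenvector_def dB using e1 e2 n1 n2 v w by auto
  qed
  have P2: "Bm N *\<^sub>v v = v" if ev: "eigenvector (Jmat N) v ((real N ^ 2 - 1) / 2)" for v
  proof -
    let ?h = "(real N ^ 2 - 1) / 2"
    from ev have v: "v \<in> carrier_vec N" and Jv: "Jmat N *\<^sub>v v = ?h \<cdot>\<^sub>v v"
      unfolding eigenvector_def dJ by auto
    have w: "Bm N *\<^sub>v v \<in> carrier_vec N" using B v by simp
    have JBv': "Jmat N *\<^sub>v (Bm N *\<^sub>v v) = ?h \<cdot>\<^sub>v (Bm N *\<^sub>v v)"
      using JBv[OF v Jv] by (simp add: field_simps)
    have Jw: "Jmat N *\<^sub>v (v - Bm N *\<^sub>v v) = ?h \<cdot>\<^sub>v (v - Bm N *\<^sub>v v)"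
      using J B v w by (intro eq_vecI) (auto simp: mult_minus_distrib_mat_vec[of _ N N] Jv JBv' dB field_simps)
    have "(Bm N *\<^sub>v v) $ 0 = (\<Sum>k<N. Bm N $$ (0,k) * v $ k)"
      using assms B v by (intro mult_vec_entry) auto
    also have "\<dots> = (\<Sum>k<N. if k = 0 then v $ 0 else 0)"
      using assms by (intro sum.cong) (auto simp: Bm_def)
    also have "\<dots> = v $ 0" using assms by simp
    finally have "(v - Bm N *\<^sub>v v) $ 0 = 0" using assms v w dB by simp
    from rec_zero[OF _ Jw this] v w have "v - Bm N *\<^sub>v v = 0\<^sub>v N" by simp
    then show ?thesis by (rule diff_zero_vec(2)[OF v w])
  qed
  show ?thesis unfolding B_eq using P1 P2 by blast
qed

end
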